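(* Let $p$ be an odd prime, $n$ a positive integer, $d=\frac{p^n+1}{2}$ and $F(x)=x^d$ on $\mathrm{GF}(p^n)$. For every $c\in\mathrm{GF}(p^n)$ with $c\neq\pm1$, ${}_c\Delta_F\le 4$. Moreover, if $p^n\equiv1\pmod 4$ and $c\neq\pm1$ satisfies $\chi\big(\frac{1-c}{1+c}\big)=1$, then ${}_c\Delta_F\le 2$.
   Context: For a function $F:\mathrm{GF}(p^n)\to\mathrm{GF}(p^n)$ and $a,b,c\in\mathrm{GF}(p^n)$, let ${}_c\Delta_F(a,b)=\#\{x\in\mathrm{GF}(p^n): F(x+a)-cF(x)=b\}$. The $c$-differential uniformity of $F$ is ${}_c\Delta_F=\max\{{}_c\Delta_F(a,b): a,b\in\mathrm{GF}(p^n),\ \text{and } a\neq 0 \text{ if } c=1\}$. $\chi$ denotes the quadratic multiplicative character of $\mathrm{GF}(p^n)^*$ ($\chi(y)=1$ if $y$ is a nonzero square, $-1$ otherwise). *)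

theory Defs
  imports Main "HOL-Computational_Algebra.Primes"
begin

definition cdiff_count :: "('a::{field,finite} \<Rightarrow> 'a) \<Rightarrow> 'a \<Rightarrow> 'a \<Rightarrow> 'a \<Rightarrow> nat" where
  "cdiff_count F c a b = card {x. F (x + a) - c * F x = b}"

definition cdiff_uniformity :: "('a::{field,finite} \<Rightarrow> 'a) \<Rightarrow> 'a \<Rightarrow> nat" where
  "cdiff_uniformity F c =
     Max {cdiff_count F c a b | a b. c \<noteq> 1 \<or> a \<noteq> 0}"

text \<open>Quadratic character on the nonzero elements (value -1 at 0 is irrelevant here).\<close>
definition qchi :: "'a::field \<Rightarrow> int" where
  "qchi y = (if y \<noteq> 0 \<and> (\<exists>z. y = z ^ 2) then 1 else -1)"

end

theory Submission
  imports Defs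
begin

lemma fermat_fin:
  fixes x :: "'a::{field,finite}"
  assumes "x \<noteq> 0"
  shows "x ^ (card (UNIV::'a set) - 1) = 1"
proof -
  let ?U = "UNIV - {0::'a}"
  have cU: "card ?U = card (UNIV::'a set) - 1" by (simp add: card_Diff_singleton)
  have inj: "inj_on ((*) x) ?U" using assms by (auto simp: inj_on_def)
  have img: "(*) x ` ?U = ?U"
  proof
    show "(*) x ` ?U \<subseteq> ?U" using assms by auto
    show "?U \<subseteq> (*) x ` ?U"
    proof
      fix y assume "y \<in> ?U"
      then have "y = x * (y / x)" "y / x \<in> ?U" using assms by auto
      then show "y \<in> (*) x ` ?U" by blast
    qed
  qed
  have "prod (\<lambda>y. y) ?U = prod (\<lambda>y. y) ((*) x ` ?U)" using img by simp
  also have "\<dots> = prod (\<lambda>y. x * y) ?U" using prod.reindex[OF inj] by simp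
  also have "\<dots> = x ^ card ?U * prod (\<lambda>y. y) ?U" by (simp add: prod.distrib)
  finally have "1 * prod (\<lambda>y. y) ?U = x ^ card ?U * prod (\<lambda>y. y) ?U" by simp
  moreover have "prod (\<lambda>y. y) ?U \<noteq> 0" by simp
  ultimately have "x ^ card ?U = 1" by (metis mult_right_cancel)
  then show ?thesis using cU by simp
qed

theorem theorem6:
  fixes p n :: nat and c :: "'a::{field,finite}"
  assumes "prime p" and "odd p" and "n > 0"
    and "card (UNIV :: 'a set) = p ^ n"
    and "c \<noteq> 1" and "c \<noteq> -1"
  shows "cdiff_uniformity (\<lambda>x::'a. x ^ ((p ^ n + 1) div 2)) c \<le> 4
     \<and> ((p ^ n) mod 4 = 1 \<and> qchi ((1 - c) / (1 + c)) = 1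
          \<longrightarrow> cdiff_uniformity (\<lambda>x::'a. x ^ ((p ^ n + 1) div 2)) c \<le> 2)"
proof -
  define q where "q = p ^ n"
  define h where "h = (q - 1) div 2"
  have oq: "odd q" using assms(2) q_def by simp
  have q1: "q \<ge> 1" using oq by (cases q) auto
  have dh: "(p ^ n + 1) div 2 = h + 1"
  proof -
    obtain k where "q = 2 * k + 1" using oq oddE by blast
    then show ?thesis unfolding h_def q_def[symmetric] by simp
  qed
  have h2: "2 * h = q - 1" using oq unfolding h_def by simp
  have ferm: "\<And>x::'a. x \<noteq> 0 \<Longrightarrow> x ^ (2 * h) = 1"
    using fermat_fin h2 assms(4) q_def by metis
  have pm: "\<And>x::'a. x \<noteq> 0 \<Longrightarrow> x ^ h = 1 \<or> x ^ h = -1"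
  proof -
    fix x :: 'a assume "x \<noteq> 0"
    then have "(x ^ h) ^ 2 = 1" using ferm by (simp add: power_mult[symmetric] mult.commute)
    then show "x ^ h = 1 \<or> x ^ h = -1" by (simp add: power2_eq_1_iff)
  qed
  define sg where "sg x = (if x ^ h = (-1::'a) then -1 else (1::'a))" for x
  have sgv: "sg x = 1 \<or> sg x = -1" for x by (simp add: sg_def)
  have Fsg: "x ^ (h + 1) = sg x * x" for x :: 'a
  proof (cases "x = 0")
    case True then show ?thesis by simp
  next
    case False then show ?thesis using pm[OF False] by (auto simp: sg_def)
  qed
  have coef: "e1 - c * e2 \<noteq> 0" if "e1 = 1 \<or> e1 = -1" "e2 = 1 \<or> e2 = -1" for e1 e2 :: 'a
  proof -
    have a: "1 - c \<noteq> 0" "1 + c \<noteq> 0" using assms(5,6) by (auto simp: add_eq_0_iff)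
    have b: "- 1 - c \<noteq> 0" "- 1 + c \<noteq> 0" 
    proof -
      have e1: "- 1 - c = - (1 + c)" and e2: "- 1 + c = - (1 - c)" by simp_all
      show "- 1 - c \<noteq> 0" unfolding e1 using a(2) by (simp only: neg_equal_0_iff_equal) simp
      show "- 1 + c \<noteq> 0" unfolding e2 using a(1) by (simp only: neg_equal_0_iff_equal) simp
    qed
    show ?thesis using that
    proof (elim disjE)
      assume "e1 = 1" "e2 = 1" then show ?thesis using a by simp
    next
      assume "e1 = 1" "e2 = -1" then show ?thesis using a by simp
    next
      assume "e1 = -1" "e2 = 1" then show ?thesis using b by simp
    next
      assume "e1 = -1" "e2 = -1" then show ?thesis using b by simp
    qed
  qed
  define F where "F = (\<lambda>x::'a. x ^ ((p ^ n + 1) div 2))"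
  have Fe: "F x = sg x * x" for x unfolding F_def dh by (rule Fsg)
  define S where "S a b = {x. F (x + a) - c * F x = b}" for a b
  have lin: "(sg (x + a) - c * sg x) * x = b - sg (x + a) * a" if "x \<in> S a b" for x a b
    using that unfolding S_def Fe by (auto simp: algebra_simps)
  have xval: "x = (b - sg (x + a) * a) / (sg (x + a) - c * sg x)" if "x \<in> S a b" for x a b
    using lin[OF that] coef[OF sgv sgv] by (simp add: field_simps)
  have bound4: "card (S a b) \<le> 4" for a b
  proof -
    let ?g = "\<lambda>(e1, e2). (b - e1 * a) / (e1 - c * e2)"
    let ?E = "{1, -1::'a} \<times> {1, -1::'a}"
    have "S a b \<subseteq> ?g ` ?E"
    proof
      fix x assume "x \<in> S a b"
      then have "x = ?g (sg (x + a), sg x)" using xval by simp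
      moreover have "(sg (x + a), sg x) \<in> ?E" using sgv by auto
      ultimately show "x \<in> ?g ` ?E" by blast
    qed
    then have "card (S a b) \<le> card (?g ` ?E)" by (simp add: card_mono)
    also have "\<dots> \<le> card ?E" by (rule card_image_le) simp
    also have "\<dots> \<le> 4" by (simp add: card_cartesian_product card_insert_if)
    finally show ?thesis .
  qed
  have fin: "finite {cdiff_count F c a b | a b. c \<noteq> 1 \<or> a \<noteq> 0}"
  proof -
    have "{cdiff_count F c a b | a b. c \<noteq> 1 \<or> a \<noteq> 0} \<subseteq> (\<lambda>(a,b). cdiff_count F c a b) ` UNIV"
      by auto
    then show ?thesis by (rule finite_subset) simp
  qed
  have ne: "{cdiff_count F c a b | a b. c \<noteq> 1 \<or> a \<noteq> 0} \<noteq> {}" using assms(5) by auto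
  have cc: "cdiff_count F c a b = card (S a b)" for a b unfolding cdiff_count_def S_def by simp
  have P1: "cdiff_uniformity F c \<le> 4"
    unfolding cdiff_uniformity_def using fin ne bound4 cc by (auto simp: Max_le_iff)
  have P2: "cdiff_uniformity F c \<le> 2" if qc: "qchi ((1 - c) / (1 + c)) = 1"
  proof -
    have qq: "(1 - c) / (1 + c) \<noteq> 0 \<and> (\<exists>z. (1 - c) / (1 + c) = z ^ 2)"
    proof -
      have gen: "\<And>w::'a. qchi w = 1 \<Longrightarrow> w \<noteq> 0 \<and> (\<exists>z. w = z ^ 2)"
        unfolding qchi_def by (auto split: if_splits)
      show ?thesis by (rule gen[OF qc])
    qed
    then obtain z where z: "(1 - c) / (1 + c) = z ^ 2" by blast
    have z0: "z \<noteq> 0" using z qq by auto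
    have sq1: "((1 - c) / (1 + c)) ^ h = 1" using z ferm[OF z0] by (simp add: power_mult)
    have sq2: "((1 + c) / (1 - c)) ^ h = 1"
    proof -
      have "(1 + c) / (1 - c) = inverse ((1 - c) / (1 + c))" by simp
      then show ?thesis using sq1 by (metis power_inverse inverse_1)
    qed
    have same: "x = y" if xs: "x \<in> S a b" and ys: "y \<in> S a b" and eq: "sg (x + a) = sg (y + a)"
      for x y a b
    proof (cases "sg x = sg y")
      case True
      then show ?thesis using xval[OF xs] xval[OF ys] eq by simp
    next
      case False
      have key: "u = v" if us: "u \<in> S a b" and vs: "v \<in> S a b" and eq': "sg (u + a) = sg (v + a)"
        and su: "sg u = 1" and sv: "sg v \<noteq> 1" for u v
      proof -
        have vh: "v ^ h = -1" using sv by (auto simp: sg_def split: if_splits)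
        have m1: "(-1::'a) \<noteq> 1" using sv by (auto simp: sg_def split: if_splits)
        have svv: "sg v = -1" using sgv sv by blast
        define e where "e = sg (u + a)"
        have ev: "e = 1 \<or> e = -1" using sgv e_def by auto
        have lu: "(e - c) * u = b - e * a" using lin[OF us] su e_def by simp
        have lv: "(e + c) * v = b - e * a" using lin[OF vs] svv eq' e_def by simp
        have ne1: "e - c \<noteq> 0" using coef[of e 1] ev by simp
        have ne2: "e + c \<noteq> 0" using coef[of e "-1"] ev by simp
        have eqq: "(e - c) * u = (e + c) * v" using lu lv by simp
        have "u = ((e - c) * u) / (e - c)" using ne1 by simp
        also have "\<dots> = v * ((e + c) / (e - c))" unfolding eqq by simp
        finally have uv: "u = v * ((e + c) / (e - c))" .
        have r: "((e + c) / (e - c)) ^ h = 1"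
          using ev
        proof (rule disjE)
          assume "e = 1" then show ?thesis using sq2 by simp
        next
          assume "e = -1"
          then have "(e + c) / (e - c) = (1 - c) / (1 + c)"
          proof -
            have "e + c = - (1 - c)" "e - c = - (1 + c)" using \<open>e = -1\<close> by simp_all
            then show ?thesis by (simp only: minus_divide_divide)
          qed
          then show ?thesis using sq1 by simp
        qed
        have "u ^ h = -1" unfolding uv power_mult_distrib vh r by simp
        then have "sg u = -1" by (simp add: sg_def)
        then show ?thesis using su m1 by simp
      qed
      show ?thesis
      proof (cases "sg x = 1")
        case True
        then show ?thesis using key[OF xs ys eq] False by simp
      next
        case F: False
        then have "sg y = 1" using False sgv by metis
        then show ?thesis using key[OF ys xs eq[symmetric]] F by simp
      qed
    qed
    have bound2: "card (S a b) \<le> 2" for a b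
    proof -
      let ?A = "{x \<in> S a b. sg (x + a) = 1}"
      let ?B = "{x \<in> S a b. sg (x + a) \<noteq> 1}"
      have cA: "card ?A \<le> Suc 0"
        by (subst card_le_Suc0_iff_eq[OF finite]) (auto intro: same)
      have cB: "card ?B \<le> Suc 0"
      proof (subst card_le_Suc0_iff_eq[OF finite], intro ballI)
        fix x y assume "x \<in> ?B" "y \<in> ?B"
        then have "x \<in> S a b" "y \<in> S a b" "sg (x + a) = - 1" "sg (y + a) = -1"
          using sgv by (metis (mono_tags, lifting) mem_Collect_eq)+
        then show "x = y" using same by metis
      qed
      have "S a b = ?A \<union> ?B" by auto
      then have e: "card (S a b) = card (?A \<union> ?B)" by (rule arg_cong)
      have "card (S a b) \<le> card ?A + card ?B" unfolding e by (rule card_Un_le)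
      then show ?thesis using cA cB by simp
    qed
    show ?thesis
      unfolding cdiff_uniformity_def using fin ne bound2 cc by (auto simp: Max_le_iff)
  qed
  show ?thesis using P1 P2 unfolding F_def by blast
qed

end
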